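(* Let $G$ be a connected graph with node set $V$, $n=|V|$, and let $r$ be a ranking of $V$. Let $f$ be a function such that $f(v,\ell)$ can be evaluated for any $v\in V$ and $\ell\le e(v)$. If $f(v,\cdot)$ is non-decreasing for all $v\in V$, i.e., $f(v,\ell)\le f(v,\ell')$ for $\ell\le\ell'$, then the minimum eccentricity selection procedure described below returns a node $u$ such that $f(u,e(u))$ is minimal over all nodes, and updates the lower certificate $L$ so that $e_L(u)=e(u)$ and $f(v,e_L(v))\ge f(u,e(u))$ for all $v\in V$. Moreover, $k$ successive computations of a node minimizing $f(u,e(u))$ with this procedure use $k+2|L'|$ one-to-all distance queries and $(k+2|L'|)n$ evaluations of $f$, where $L'\subseteq \{\mathrm{antipode}_r(v): v\in V\}$ denotes the set of nodes added to $L$.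
   Context: For nodes $u,v$, $d(u,v)$ is the shortest-path distance and $e(u)=\max_{v\in V} d(u,v)$ is the eccentricity of $u$. Given a ranking $r$ of the nodes, the antipode $\mathrm{antipode}_r(u)$ of $u$ is its furthest node of highest rank, i.e., $\mathrm{antipode}_r(u)=\arg\max_{v\in V}(d(u,v),r(v))$ with pairs compared lexicographically. A one-to-all distance query from $u$ (e.g., a BFS) returns $d(u,v)$ for all $v\in V$, from which $e(u)$ and $\mathrm{antipode}_r(u)$ are obtained. For a set $L$ of nodes (a lower certificate), $e_L(v)=\max_{x\in L} d(v,x)$ (equal to $0$ when $L=\emptyset$), so that $e_L(v)\le e(v)$. The minimum eccentricity selection procedure for $f$ maintains a set $L$ (initially empty) together with the values $e_L(v)$ for all $v\in V$, and, when called, repeats the following: pick $u=\arg\min_{v\in V} f(v,e_L(v))$; perform a one-to-all distance query from $u$ to obtain $e(u)$; if $e_L(u)=e(u)$, return $u$; otherwise let $a=\mathrm{antipode}_r(u)$, perform a one-to-all distance query from $a$, add $a$ to $L$, and update $e_L(v):=\max(e_L(v),d(a,v))$ for all $v\in V$. *)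

theory Defs
  imports Main
begin

definition dist :: "('a \<Rightarrow> 'a \<Rightarrow> bool) \<Rightarrow> 'a \<Rightarrow> 'a \<Rightarrow> nat" where
  "dist E u v = (LEAST n. (E ^^ n) u v)"

definition ecc :: "'a set \<Rightarrow> ('a \<Rightarrow> 'a \<Rightarrow> bool) \<Rightarrow> 'a \<Rightarrow> nat" where
  "ecc V E u = Max ((dist E u) ` V)"

definition eL :: "('a \<Rightarrow> 'a \<Rightarrow> bool) \<Rightarrow> 'a set \<Rightarrow> 'a \<Rightarrow> nat" where
  "eL E L v = Max (insert 0 ((dist E v) ` L))"

text \<open>Furthest node of highest rank (lexicographic comparison of (d(u,v), r(v))).\<close>
definition antipode :: "'a set \<Rightarrow> ('a \<Rightarrow> 'a \<Rightarrow> bool) \<Rightarrow> ('a \<Rightarrow> nat) \<Rightarrow> 'a \<Rightarrow> 'a" where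
  "antipode V E r u = (THE v. v \<in> V \<and> (\<forall>w\<in>V. dist E u w < dist E u v \<or>
                         (dist E u w = dist E u v \<and> r w \<le> r v)))"

definition is_argmin :: "'a set \<Rightarrow> ('a \<Rightarrow> 'a \<Rightarrow> bool) \<Rightarrow> ('a \<Rightarrow> nat \<Rightarrow> 'b::linorder) \<Rightarrow> 'a set \<Rightarrow> 'a \<Rightarrow> bool" where
  "is_argmin V E f L u \<longleftrightarrow> u \<in> V \<and> (\<forall>v\<in>V. f u (eL E L u) \<le> f v (eL E L v))"

text \<open>One call of the minimum eccentricity selection procedure (nondeterministic in the
  tie-breaking of the argmin).  msel V E r f L u L' q c: started with certificate L, the call
  returns u, leaves certificate L', and uses q one-to-all distance queries and c evaluations
  of f (each argmin over V costs card V evaluations).\<close>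
inductive msel :: "'a set \<Rightarrow> ('a \<Rightarrow> 'a \<Rightarrow> bool) \<Rightarrow> ('a \<Rightarrow> nat) \<Rightarrow> ('a \<Rightarrow> nat \<Rightarrow> 'b::linorder)
    \<Rightarrow> 'a set \<Rightarrow> 'a \<Rightarrow> 'a set \<Rightarrow> nat \<Rightarrow> nat \<Rightarrow> bool"
  for V E r f where
  ret: "is_argmin V E f L u \<Longrightarrow> eL E L u = ecc V E u \<Longrightarrow> msel V E r f L u L 1 (card V)"
| step: "is_argmin V E f L u \<Longrightarrow> eL E L u \<noteq> ecc V E u \<Longrightarrow>
    msel V E r f (insert (antipode V E r u) L) u' L' q c \<Longrightarrow>
    msel V E r f L u' L' (q + 2) (c + card V)"

inductive msel_seq :: "'a set \<Rightarrow> ('a \<Rightarrow> 'a \<Rightarrow> bool) \<Rightarrow> ('a \<Rightarrow> nat) \<Rightarrow> ('a \<Rightarrow> nat \<Rightarrow> 'b::linorder)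
    \<Rightarrow> 'a set \<Rightarrow> nat \<Rightarrow> 'a set \<Rightarrow> nat \<Rightarrow> nat \<Rightarrow> bool"
  for V E r f where
  nil: "msel_seq V E r f L 0 L 0 0"
| cons: "msel V E r f L u L1 q1 c1 \<Longrightarrow> msel_seq V E r f L1 k L2 q2 c2 \<Longrightarrow>
    msel_seq V E r f L (Suc k) L2 (q1 + q2) (c1 + c2)"

end

theory Submission
  imports Defs
begin

lemma antipode_prop:
  assumes finV: "finite V" and neV: "V \<noteq> {}" and rank: "inj_on r V"
  shows "antipode V E r u \<in> V \<and> (\<forall>w\<in>V. dist E u w \<le> dist E u (antipode V E r u))"
proof -
  define P where "P v \<longleftrightarrow> v \<in> V \<and> (\<forall>w\<in>V. dist E u w < dist E u v \<or>
                         (dist E u w = dist E u v \<and> r w \<le> r v))" for v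
  define m where "m = Max (dist E u ` V)"
  define S where "S = {v\<in>V. dist E u v = m}"
  have mV: "m \<in> dist E u ` V" unfolding m_def using finV neV by simp
  have mge: "\<And>w. w \<in> V \<Longrightarrow> dist E u w \<le> m" unfolding m_def using finV by simp
  have finS: "finite S" "S \<noteq> {}" unfolding S_def using finV mV by auto
  obtain v where vS: "v \<in> S" and vr: "r v = Max (r ` S)"
    using finS by (metis (mono_tags, lifting) Max_in finite_imageI image_iff image_is_empty)
  have Pv: "P v"
    unfolding P_def
  proof (intro conjI ballI)
    show "v \<in> V" using vS S_def by auto
    fix w assume w: "w \<in> V"
    show "dist E u w < dist E u v \<or> (dist E u w = dist E u v \<and> r w \<le> r v)"
    proof (cases "dist E u w = m")
      case True
      then have "w \<in> S" using w S_def by auto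
      then have "r w \<le> r v" using vr finS by simp
      then show ?thesis using True vS S_def by auto
    next
      case False then show ?thesis using mge[OF w] vS S_def by auto
    qed
  qed
  have uniq: "\<And>x. P x \<Longrightarrow> x = v"
  proof -
    fix x assume Px: "P x"
    have x1: "dist E u v < dist E u x \<or> (dist E u v = dist E u x \<and> r v \<le> r x)"
      using Px Pv unfolding P_def by blast
    have x2: "dist E u x < dist E u v \<or> (dist E u x = dist E u v \<and> r x \<le> r v)"
      using Px Pv unfolding P_def by blast
    have "dist E u x = dist E u v \<and> r x = r v" using x1 x2 by auto
    then show "x = v" using Px Pv rank unfolding P_def inj_on_def by blast
  qed
  have "antipode V E r u = v"
    unfolding antipode_def using Pv uniq unfolding P_def by (rule the_equality)
  then show ?thesis using Pv unfolding P_def by auto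
qed

lemma ecc_antipode:
  assumes "finite V" "V \<noteq> {}" "inj_on r V"
  shows "dist E u (antipode V E r u) = ecc V E u"
proof -
  have a: "antipode V E r u \<in> V" "\<forall>w\<in>V. dist E u w \<le> dist E u (antipode V E r u)"
    using antipode_prop[OF assms] by auto
  show ?thesis unfolding ecc_def
    by (rule sym, rule Max_eqI) (use assms a in auto)
qed

lemma eL_le_ecc:
  assumes "finite V" "V \<noteq> {}" "L \<subseteq> V"
  shows "eL E L v \<le> ecc V E v"
proof -
  have fL: "finite L" using assms finite_subset by blast
  show ?thesis unfolding eL_def ecc_def
    using assms fL by (auto simp: Max_le_iff intro!: Max_ge_iff[THEN iffD2])
qed

lemma dist_le_eL:
  assumes "finite L" "x \<in> L"
  shows "dist E v x \<le> eL E L v"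
  unfolding eL_def using assms by simp

lemma anti_notin:
  assumes "finite V" "V \<noteq> {}" "inj_on r V" "L \<subseteq> V" "eL E L u \<noteq> ecc V E u"
  shows "antipode V E r u \<notin> L"
proof
  assume a: "antipode V E r u \<in> L"
  have fL: "finite L" using assms finite_subset by blast
  have "ecc V E u \<le> eL E L u"
    using dist_le_eL[OF fL a, of E u] ecc_antipode[OF assms(1-3), of E u] by simp
  then show False using eL_le_ecc[OF assms(1,2,4), of E u] assms(5) by simp
qed

lemma msel_props:
  assumes finV: "finite V" and neV: "V \<noteq> {}" and rank: "inj_on r V"
  shows "msel V E r f L u L' q c \<Longrightarrow> L \<subseteq> V \<Longrightarrow>
     u \<in> V \<and> is_argmin V E f L' u \<and> eL E L' u = ecc V E u \<and> L \<subseteq> L' \<and> L' \<subseteq> V \<and>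
     L' - L \<subseteq> antipode V E r ` V \<and>
     (\<exists>s. q = 1 + 2*s \<and> c = (1+s) * card V \<and> card L' = card L + s)"
proof (induction rule: msel.induct)
  case (ret L u)
  then show ?case unfolding is_argmin_def by auto
next
  case (step L u u' L' q c)
  let ?a = "antipode V E r u"
  have uV: "u \<in> V" using step.hyps(1) unfolding is_argmin_def by auto
  have aV: "?a \<in> V" using antipode_prop[OF finV neV rank] by auto
  have an: "?a \<notin> L" using anti_notin[OF finV neV rank step.prems step.hyps(2)] .
  have fL: "finite L" using step.prems finV finite_subset by blast
  have IH: "u' \<in> V \<and> is_argmin V E f L' u' \<and> eL E L' u' = ecc V E u' \<and> insert ?a L \<subseteq> L' \<and> L' \<subseteq> V \<and>
     L' - insert ?a L \<subseteq> antipode V E r ` V \<and>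
     (\<exists>s. q = 1 + 2*s \<and> c = (1+s) * card V \<and> card L' = card (insert ?a L) + s)"
    using step.IH step.prems aV by auto
  then obtain s where s: "q = 1 + 2*s" "c = (1+s) * card V" "card L' = card (insert ?a L) + s" by blast
  have ci: "card (insert ?a L) = card L + 1" using fL an by simp
  have "L' - L \<subseteq> antipode V E r ` V" using IH uV by auto
  moreover have "q + 2 = 1 + 2*(s+1) \<and> c + card V = (1+(s+1)) * card V \<and> card L' = card L + (s+1)"
    using s ci by simp
  ultimately show ?case using IH by blast
qed

lemma msel_exists:
  assumes finV: "finite V" and neV: "V \<noteq> {}" and rank: "inj_on r V"
  shows "L \<subseteq> V \<Longrightarrow> \<exists>u L' q c. msel V E r f L u L' q c"
proof (induction "card V - card L" arbitrary: L rule: less_induct)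
  case less
  define g where "g v = f v (eL E L v)" for v
  define u where "u = arg_min_on g V"
  have "u \<in> V \<and> \<not>(\<exists>x\<in>V. g x < g u)"
    unfolding u_def using arg_min_if_finite[OF finV neV] by blast
  then have am: "is_argmin V E f L u" unfolding is_argmin_def g_def by (auto simp: not_less)
  show ?case
  proof (cases "eL E L u = ecc V E u")
    case True then show ?thesis using msel.ret[OF am] by blast
  next
    case False
    let ?a = "antipode V E r u"
    have aV: "?a \<in> V" using antipode_prop[OF finV neV rank] by auto
    have an: "?a \<notin> L" using anti_notin[OF finV neV rank less.prems False] .
    have fL: "finite L" using less.prems finV finite_subset by blast
    have "card (insert ?a L) = card L + 1" using fL an by simp
    moreover have "card (insert ?a L) \<le> card V"
      using aV less.prems finV by (intro card_mono) auto
    ultimately have "card V - card (insert ?a L) < card V - card L" by linarith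
    then obtain u' L' q c where "msel V E r f (insert ?a L) u' L' q c"
      using less.hyps less.prems aV by blast
    then show ?thesis using msel.step[OF am False] by blast
  qed
qed

lemma seq_props:
  assumes finV: "finite V" and neV: "V \<noteq> {}" and rank: "inj_on r V"
  shows "msel_seq V E r f L k L' q c \<Longrightarrow> L \<subseteq> V \<Longrightarrow>
     L \<subseteq> L' \<and> L' \<subseteq> V \<and> L' - L \<subseteq> antipode V E r ` V \<and>
     q = k + 2*(card L' - card L) \<and> c = (k + (card L' - card L)) * card V"
proof (induction rule: msel_seq.induct)
  case (nil L)
  then show ?case by simp
next
  case (cons L u L1 q1 c1 k L2 q2 c2)
  from msel_props[OF finV neV rank cons.hyps(1) cons.prems] obtain s where
    A: "L \<subseteq> L1" "L1 \<subseteq> V" "L1 - L \<subseteq> antipode V E r ` V"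
      "q1 = 1 + 2*s" "c1 = (1+s) * card V" "card L1 = card L + s" by blast
  have B: "L1 \<subseteq> L2" "L2 \<subseteq> V" "L2 - L1 \<subseteq> antipode V E r ` V"
      "q2 = k + 2*(card L2 - card L1)" "c2 = (k + (card L2 - card L1)) * card V"
    using cons.IH A(2) by auto
  have "card L1 \<le> card L2" using B(1,2) finV by (meson card_mono finite_subset)
  then obtain d where d: "card L2 = card L1 + d" using le_Suc_ex by blast
  have "q1 + q2 = Suc k + 2*(card L2 - card L) \<and> c1 + c2 = (Suc k + (card L2 - card L)) * card V"
    using A(4,5,6) B(4,5) d by (simp add: algebra_simps)
  moreover have "L2 - L \<subseteq> antipode V E r ` V" using A B by blast
  ultimately show ?case using A B by blast
qed

theorem proposition1:
  fixes V :: "'a set" and E :: "'a \<Rightarrow> 'a \<Rightarrow> bool" and r :: "'a \<Rightarrow> nat"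
    and f :: "'a \<Rightarrow> nat \<Rightarrow> 'b::linorder"
  assumes finV: "finite V" and neV: "V \<noteq> {}"
    and edges: "\<And>x y. E x y \<Longrightarrow> x \<in> V \<and> y \<in> V"
    and symE: "\<And>x y. E x y \<Longrightarrow> E y x"
    and conn: "\<And>x y. x \<in> V \<Longrightarrow> y \<in> V \<Longrightarrow> E\<^sup>*\<^sup>* x y"
    and rank: "inj_on r V"
    and mono: "\<And>v l l'. v \<in> V \<Longrightarrow> l \<le> l' \<Longrightarrow> l' \<le> ecc V E v \<Longrightarrow> f v l \<le> f v l'"
  shows "(\<forall>L. L \<subseteq> V \<longrightarrow>
            (\<exists>u L' q c. msel V E r f L u L' q c) \<and>
            (\<forall>u L' q c. msel V E r f L u L' q c \<longrightarrow>
               u \<in> V \<and> (\<forall>v\<in>V. f u (ecc V E u) \<le> f v (ecc V E v)) \<and>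
               eL E L' u = ecc V E u \<and>
               (\<forall>v\<in>V. f u (ecc V E u) \<le> f v (eL E L' v))))
      \<and> (\<forall>k L' q c. msel_seq V E r f {} k L' q c \<longrightarrow>
            L' \<subseteq> antipode V E r ` V \<and> q = k + 2 * card L' \<and>
            c \<le> (k + 2 * card L') * card V)"
proof -
  have P1: "(\<exists>u L' q c. msel V E r f L u L' q c)" if L: "L \<subseteq> V" for L
    using msel_exists[OF finV neV rank L] .
  have P2: "u \<in> V \<and> (\<forall>v\<in>V. f u (ecc V E u) \<le> f v (ecc V E v)) \<and>
               eL E L' u = ecc V E u \<and> (\<forall>v\<in>V. f u (ecc V E u) \<le> f v (eL E L' v))"
    if L: "L \<subseteq> V" and m: "msel V E r f L u L' q c" for L u L' q c
  proof -
  from msel_props[OF finV neV rank m L] have P: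
    "u \<in> V" "is_argmin V E f L' u" "eL E L' u = ecc V E u" "L' \<subseteq> V" by auto
  have A: "\<forall>v\<in>V. f u (ecc V E u) \<le> f v (eL E L' v)"
    using P(2,3) unfolding is_argmin_def by metis
  have "\<forall>v\<in>V. f u (ecc V E u) \<le> f v (ecc V E v)"
  proof
    fix v assume v: "v \<in> V"
    have "f v (eL E L' v) \<le> f v (ecc V E v)"
      using mono[OF v eL_le_ecc[OF finV neV P(4)] order_refl] .
    then show "f u (ecc V E u) \<le> f v (ecc V E v)" using A v order_trans by blast
  qed
  then show ?thesis using P A by blast
  qed
  have P3: "L' \<subseteq> antipode V E r ` V \<and> q = k + 2 * card L' \<and> c \<le> (k + 2 * card L') * card V"
    if s: "msel_seq V E r f {} k L' q c" for k L' q c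
    using seq_props[OF finV neV rank s] by simp
  show ?thesis
    apply (intro conjI allI impI)
    subgoal for L by (rule P1)
    subgoal for L u L' q c using P2[of L u L' q c] by simp
    subgoal for L u L' q c using P2[of L u L' q c] by simp
    subgoal for L u L' q c using P2[of L u L' q c] by simp
    subgoal for L u L' q c using P2[of L u L' q c] by simp
    subgoal for k L' q c using P3[of k L' q c] by simp
    subgoal for k L' q c using P3[of k L' q c] by simp
    subgoal for k L' q c using P3[of k L' q c] by simp
    done
qed

end
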